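(* Let $\Sigma$ be a topologically mixing two-sided subshift of finite type with a Gibbs measure $\mu$ of a H\"older potential, $0<\theta<1$, $\nu=\mu\times\mathrm{Leb}$. If $\Phi\in\mathscr G$, then $\Phi$ is a global observable and $$\nu_{\mathrm{av}}(\Phi)=\int_\Sigma\eta_x(\{0\})\,d\mu(x),$$ where $\Phi(x)=\widehat{\eta_x}$.
   Context: $d_\theta(x,y)=\theta^{\max\{j:\ x_i=y_i\ \forall|i|<j\}}$. $\mathscr A$ is the set of Fourier–Stieltjes transforms $\widehat\eta(r)=\int e^{-ir\xi}d\eta(\xi)$ of complex Borel measures of finite total variation, normed by $\|\widehat\eta\|=\|\eta\|_{TV}$. $\mathscr G$ is the space of maps $\Phi\colon\Sigma\to\mathscr A$, H\"older w.r.t. $d_\theta$, with $\Phi(x)=\widehat{\eta_x}$ satisfying: there are $a,A>0$ with $|\eta_x|(\mathbb R\setminus[-r,r])\le Ar^{-a}$ for all $r\ge1$, $x\in\Sigma$. Such $\Phi$ is viewed as the function $\Phi(x,r)=[\Phi(x)](r)$ on $\Sigma\times\mathbb R$. A global observable is $\Phi\in L^\infty(\nu)$ for which $\nu_{\mathrm{av}}(\Phi)=\lim_{R\to\infty}\frac1{2R}\int_{\Sigma\times[-R,R]}\Phi\,d\nu$ exists. *)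

theory Defs
  imports "HOL-Analysis.Analysis"
begin

definition sft :: "nat \<Rightarrow> (nat \<Rightarrow> nat \<Rightarrow> bool) \<Rightarrow> (int \<Rightarrow> nat) set" where
  "sft k A = {x. \<forall>i. x i < k \<and> A (x i) (x (i + 1))}"

definition shift :: "(int \<Rightarrow> nat) \<Rightarrow> (int \<Rightarrow> nat)" where
  "shift x = (\<lambda>i. x (i + 1))"

text \<open>Topological mixing of the shift on S, with respect to the basis of symmetric cylinders.\<close>
definition topologically_mixing :: "(int \<Rightarrow> nat) set \<Rightarrow> bool" where
  "topologically_mixing S \<longleftrightarrow>
     (\<forall>x\<in>S. \<forall>y\<in>S. \<forall>m::nat. \<exists>N::nat. \<forall>n\<ge>N. \<exists>z\<in>S.
        (\<forall>i. \<bar>i\<bar> \<le> int m \<longrightarrow> z i = x i) \<and>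
        (\<forall>i. \<bar>i\<bar> \<le> int m \<longrightarrow> (shift ^^ n) z i = y i))"

definition dtheta :: "real \<Rightarrow> (int \<Rightarrow> nat) \<Rightarrow> (int \<Rightarrow> nat) \<Rightarrow> real" where
  "dtheta \<theta> x y = (if x = y then 0
     else \<theta> ^ (GREATEST j::nat. \<forall>i. \<bar>i\<bar> < int j \<longrightarrow> x i = y i))"

definition holder_on :: "real \<Rightarrow> (int \<Rightarrow> nat) set \<Rightarrow> ((int \<Rightarrow> nat) \<Rightarrow> real) \<Rightarrow> bool" where
  "holder_on \<theta> S f \<longleftrightarrow> (\<exists>K \<alpha>. \<alpha> > 0 \<and>
      (\<forall>x\<in>S. \<forall>y\<in>S. \<bar>f x - f y\<bar> \<le> K * dtheta \<theta> x y powr \<alpha>))"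

text \<open>Borel sigma-algebra on S (= product sigma-algebra restricted to S).\<close>
definition shift_space :: "(int \<Rightarrow> nat) set \<Rightarrow> (int \<Rightarrow> nat) measure" where
  "shift_space S = restrict_space (Pi\<^sub>M UNIV (\<lambda>_::int. count_space (UNIV::nat set))) S"

definition gibbs_measure ::
  "real \<Rightarrow> (int \<Rightarrow> nat) set \<Rightarrow> (int \<Rightarrow> nat) measure \<Rightarrow> ((int \<Rightarrow> nat) \<Rightarrow> real) \<Rightarrow> bool" where
  "gibbs_measure \<theta> S \<mu> \<phi> \<longleftrightarrow>
     sets \<mu> = sets (shift_space S) \<and> space \<mu> = S \<and> emeasure \<mu> (space \<mu>) = 1 \<and>
     (\<forall>B\<in>sets \<mu>. measure \<mu> (shift -` B \<inter> S) = measure \<mu> B) \<and>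
     holder_on \<theta> S \<phi> \<and>
     (\<exists>P C. C > 0 \<and> (\<forall>x\<in>S. \<forall>n::nat. n \<ge> 1 \<longrightarrow>
        (let c = measure \<mu> {y\<in>S. \<forall>i. 0 \<le> i \<and> i < int n \<longrightarrow> y i = x i};
             g = exp (- real n * P + (\<Sum>j<n. \<phi> ((shift ^^ j) x)))
         in inverse C \<le> c / g \<and> c / g \<le> C)))"

text \<open>A complex Borel measure eta on the reals, given by its polar decomposition
  d eta = h d|eta| with |eta| a finite Borel measure and |h| = 1.\<close>
definition polar_rep :: "real measure \<Rightarrow> (real \<Rightarrow> complex) \<Rightarrow> bool" where
  "polar_rep m h \<longleftrightarrow> sets m = sets borel \<and> finite_measure m \<and>
     h \<in> borel_measurable borel \<and> (\<forall>\<xi>. norm (h \<xi>) = 1)"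

definition fs_transform :: "real measure \<Rightarrow> (real \<Rightarrow> complex) \<Rightarrow> real \<Rightarrow> complex" where
  "fs_transform m h r = (\<integral>\<xi>. cis (- r * \<xi>) * h \<xi> \<partial>m)"

text \<open>Norm in the algebra of Fourier-Stieltjes transforms: total variation of the
  (unique) representing measure.\<close>
definition fs_norm :: "(real \<Rightarrow> complex) \<Rightarrow> real" where
  "fs_norm f = Inf {measure m UNIV | m h. polar_rep m h \<and> (\<forall>r. f r = fs_transform m h r)}"

text \<open>Membership in the class G; eta_x is represented by (M x, H x).\<close>
definition in_G ::
  "real \<Rightarrow> (int \<Rightarrow> nat) set \<Rightarrow> ((int \<Rightarrow> nat) \<Rightarrow> real \<Rightarrow> complex)
    \<Rightarrow> ((int \<Rightarrow> nat) \<Rightarrow> real measure) \<Rightarrow> ((int \<Rightarrow> nat) \<Rightarrow> real \<Rightarrow> complex) \<Rightarrow> bool" where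
  "in_G \<theta> S \<Phi> M H \<longleftrightarrow>
     (\<forall>x\<in>S. polar_rep (M x) (H x) \<and> (\<forall>r. \<Phi> x r = fs_transform (M x) (H x) r)) \<and>
     (\<exists>C \<alpha>. \<alpha> > 0 \<and> (\<forall>x\<in>S. \<forall>y\<in>S.
         fs_norm (\<lambda>r. \<Phi> x r - \<Phi> y r) \<le> C * dtheta \<theta> x y powr \<alpha>)) \<and>
     (\<exists>a A. a > 0 \<and> A > 0 \<and> (\<forall>x\<in>S. \<forall>r::real. r \<ge> 1 \<longrightarrow>
         measure (M x) (- {-r..r}) \<le> A * r powr (- a)))"

definition window_avg :: "('a \<times> real) measure \<Rightarrow> ('a \<times> real \<Rightarrow> complex) \<Rightarrow> real \<Rightarrow> complex" where
  "window_avg \<nu> F R = complex_of_real (1 / (2 * R)) *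
      (LINT p : {p \<in> space \<nu>. \<bar>snd p\<bar> \<le> R} | \<nu>. F p)"

definition global_observable :: "('a \<times> real) measure \<Rightarrow> ('a \<times> real \<Rightarrow> complex) \<Rightarrow> bool" where
  "global_observable \<nu> F \<longleftrightarrow> F \<in> borel_measurable \<nu> \<and> (\<exists>B. AE p in \<nu>. norm (F p) \<le> B) \<and>
     (\<exists>L. (window_avg \<nu> F \<longlongrightarrow> L) at_top)"

definition nu_av :: "('a \<times> real) measure \<Rightarrow> ('a \<times> real \<Rightarrow> complex) \<Rightarrow> complex" where
  "nu_av \<nu> F = Lim at_top (window_avg \<nu> F)"

end

theory Submission
  imports Defs "HOL-Probability.Probability"
begin


lemma polar_rep_space: "polar_rep m h \<Longrightarrow> space m = UNIV"
  unfolding polar_rep_def by (metis sets_eq_imp_space_eq space_borel)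

lemma polar_rep_meas_iff: "polar_rep m h \<Longrightarrow> (f \<in> borel_measurable m) = (f \<in> borel_measurable borel)"
  unfolding polar_rep_def using measurable_cong_sets[of m borel borel borel] by auto

lemma cis_meas[measurable]: "(\<lambda>x. cis (- r * x)) \<in> borel_measurable borel"
  by (intro borel_measurable_continuous_onI continuous_intros)

lemma fs_integrand_meas: "polar_rep m h \<Longrightarrow> (\<lambda>\<xi>. cis (- r * \<xi>) * h \<xi>) \<in> borel_measurable m"
  apply (subst polar_rep_meas_iff, assumption)
  unfolding polar_rep_def by (elim conjE, rule borel_measurable_times[OF cis_meas]) 

lemma fs_integrable: "polar_rep m h \<Longrightarrow> integrable m (\<lambda>\<xi>. cis (- r * \<xi>) * h \<xi>)"
proof -
  assume p: "polar_rep m h"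
  then interpret finite_measure m unfolding polar_rep_def by auto
  show ?thesis
    by (rule integrable_const_bound[where B=1]) (use p fs_integrand_meas[OF p] in \<open>auto simp: polar_rep_def norm_mult\<close>)
qed

lemma fs_bound: "polar_rep m h \<Longrightarrow> norm (fs_transform m h r) \<le> measure m UNIV"
proof -
  assume p: "polar_rep m h"
  then interpret finite_measure m unfolding polar_rep_def by auto
  have "norm (fs_transform m h r) \<le> (\<integral>\<xi>. norm (cis (- r * \<xi>) * h \<xi>) \<partial>m)"
    unfolding fs_transform_def by (rule integral_norm_bound)
  also have "\<dots> = (\<integral>\<xi>. 1 \<partial>m)"
    using p by (intro Bochner_Integration.integral_cong) (auto simp: polar_rep_def norm_mult)
  also have "\<dots> = measure m UNIV" using polar_rep_space[OF p] by simp
  finally show ?thesis .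
qed



definition msum :: "real measure \<Rightarrow> real measure \<Rightarrow> real measure" where
  "msum m1 m2 = measure_of UNIV (sets borel) (\<lambda>A. emeasure m1 A + emeasure m2 A)"

lemma msum_props:
  assumes s1: "sets m1 = sets borel" and s2: "sets m2 = sets borel"
  shows "sets (msum m1 m2) = sets borel"
    and "A \<in> sets borel \<Longrightarrow> emeasure (msum m1 m2) A = emeasure m1 A + emeasure m2 A"
proof -
  have sa: "sigma_algebra UNIV (sets borel)" using sets.sigma_algebra_axioms[of borel] by simp
  show "sets (msum m1 m2) = sets borel"
    unfolding msum_def using sa
    by (subst sets_measure_of) (auto simp: sigma_algebra.sigma_sets_eq[OF sa])
  assume A: "A \<in> sets borel"
  show "emeasure (msum m1 m2) A = emeasure m1 A + emeasure m2 A"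
    unfolding msum_def
  proof (rule emeasure_measure_of_sigma[OF sa _ _ A])
    show "positive (sets borel) (\<lambda>A. emeasure m1 A + emeasure m2 A)"
      by (simp add: positive_def)
    show "countably_additive (sets borel) (\<lambda>A. emeasure m1 A + emeasure m2 A)"
      unfolding countably_additive_def
    proof (intro allI impI)
      fix F :: "nat \<Rightarrow> real set"
      assume F: "range F \<subseteq> sets borel" "disjoint_family F"
      have "(\<Sum>i. emeasure m1 (F i) + emeasure m2 (F i)) = (\<Sum>i. emeasure m1 (F i)) + (\<Sum>i. emeasure m2 (F i))"
        by (rule suminf_add[symmetric]) (auto intro: summableI)
      also have "\<dots> = emeasure m1 (\<Union>i. F i) + emeasure m2 (\<Union>i. F i)"
        using F s1 s2 by (simp add: suminf_emeasure)
      finally show "(\<Sum>i. emeasure m1 (F i) + emeasure m2 (F i)) = emeasure m1 (\<Union> (range F)) + emeasure m2 (\<Union> (range F))" .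
    qed
  qed
qed

lemma real_density_exists:
  fixes m m1 :: "real measure"
  assumes fm: "finite_measure m" and fm1: "finite_measure m1"
    and s: "sets m = sets borel" "sets m1 = sets borel"
    and ac: "\<And>A. A \<in> sets borel \<Longrightarrow> emeasure m A = 0 \<Longrightarrow> emeasure m1 A = 0"
  shows "\<exists>d. d \<in> borel_measurable borel \<and> (\<forall>x. 0 \<le> d x) \<and> density m (\<lambda>x. ennreal (d x)) = m1"
proof -
  interpret finite_measure m by fact
  have "absolutely_continuous m m1"
    unfolding absolutely_continuous_def using ac s by (auto simp: null_sets_def)
  then obtain f where f: "f \<in> borel_measurable m" "density m f = m1"
    using Radon_Nikodym s by metis
  have fb: "f \<in> borel_measurable borel" using f(1) s measurable_cong_sets[of m borel borel borel] by auto
  have "integral\<^sup>N m f = emeasure (density m f) (space m)"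
    using f(1) by (simp add: emeasure_density)
  also have "\<dots> \<noteq> \<infinity>"
  proof -
    have "space m = space m1" using s sets_eq_imp_space_eq by metis
    then show ?thesis using f(2) finite_measure.emeasure_finite[OF fm1] by simp
  qed
  finally have "AE x in m. f x \<noteq> \<infinity>" using nn_integral_PInf_AE[OF f(1)] by auto
  then have "density m (\<lambda>x. ennreal (enn2real (f x))) = density m f"
    using f(1) by (intro density_cong) (auto elim!: AE_mp intro!: AE_I2 simp: ennreal_enn2real_if)
  then show ?thesis using f(2) fb by (intro exI[of _ "\<lambda>x. enn2real (f x)"]) auto
qed



lemma fs_diff_rep:
  assumes p1: "polar_rep m1 h1" and p2: "polar_rep m2 h2"
  shows "\<exists>m h. polar_rep m h \<and> (\<forall>r. fs_transform m1 h1 r - fs_transform m2 h2 r = fs_transform m h r)"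
proof -
  define m where "m = msum m1 m2"
  have s1: "sets m1 = sets borel" and s2: "sets m2 = sets borel" using p1 p2 by (auto simp: polar_rep_def)
  have fm1: "finite_measure m1" and fm2: "finite_measure m2" using p1 p2 by (auto simp: polar_rep_def)
  have sm: "sets m = sets borel" unfolding m_def by (rule msum_props(1)[OF s1 s2])
  have em: "A \<in> sets borel \<Longrightarrow> emeasure m A = emeasure m1 A + emeasure m2 A" for A
    unfolding m_def by (rule msum_props(2)[OF s1 s2])
  have spm: "space m = UNIV" using sm by (metis sets_eq_imp_space_eq space_borel)
  have sp1: "space m1 = UNIV" using polar_rep_space[OF p1] .
  have sp2: "space m2 = UNIV" using polar_rep_space[OF p2] .
  have fm: "finite_measure m"
  proof
    show "emeasure m (space m) \<noteq> \<infinity>" using spm em[of UNIV]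
      finite_measure.emeasure_finite[OF fm1] finite_measure.emeasure_finite[OF fm2] sp1 sp2 by simp
  qed
  interpret finite_measure m by (rule fm)
  have mb: "f \<in> borel_measurable m \<longleftrightarrow> f \<in> borel_measurable borel" for f :: "real \<Rightarrow> 'z::topological_space"
    using sm measurable_cong_sets[of m borel borel borel] by auto
  obtain d1 where d1: "d1 \<in> borel_measurable borel" "\<And>x. 0 \<le> d1 x" "density m (\<lambda>x. ennreal (d1 x)) = m1"
    using real_density_exists[OF fm fm1 sm s1] em by (metis add_eq_0_iff_both_eq_0)
  obtain d2 where d2: "d2 \<in> borel_measurable borel" "\<And>x. 0 \<le> d2 x" "density m (\<lambda>x. ennreal (d2 x)) = m2"
    using real_density_exists[OF fm fm2 sm s2] em by (metis add_eq_0_iff_both_eq_0)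
  have hb1: "h1 \<in> borel_measurable borel" and hb2: "h2 \<in> borel_measurable borel"
    and hn1: "\<And>x. norm (h1 x) = 1" and hn2: "\<And>x. norm (h2 x) = 1" using p1 p2 by (auto simp: polar_rep_def)
  have tr1: "integrable m (\<lambda>x. d1 x *\<^sub>R f x) \<and> integral\<^sup>L m1 f = integral\<^sup>L m (\<lambda>x. d1 x *\<^sub>R f x)"
    if "integrable m1 f" "f \<in> borel_measurable borel" for f :: "real \<Rightarrow> complex"
  proof -
    have fm': "f \<in> borel_measurable m" using that mb by auto
    have dm: "d1 \<in> borel_measurable m" using d1 mb by auto
    show ?thesis
      using that(1) integrable_density[OF fm' dm] integral_density[OF fm' dm] d1 by auto
  qed
  have tr2: "integrable m (\<lambda>x. d2 x *\<^sub>R f x) \<and> integral\<^sup>L m2 f = integral\<^sup>L m (\<lambda>x. d2 x *\<^sub>R f x)"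
    if "integrable m2 f" "f \<in> borel_measurable borel" for f :: "real \<Rightarrow> complex"
  proof -
    have fm': "f \<in> borel_measurable m" using that mb by auto
    have dm: "d2 \<in> borel_measurable m" using d2 mb by auto
    show ?thesis
      using that(1) integrable_density[OF fm' dm] integral_density[OF fm' dm] d2 by auto
  qed
  define g where "g x = d1 x *\<^sub>R h1 x - d2 x *\<^sub>R h2 x" for x
  have gb: "g \<in> borel_measurable borel" unfolding g_def using d1(1) d2(1) hb1 hb2 by measurable
  have int_h1: "integrable m1 h1"
    using fm1 hb1 hn1 s1 by (intro finite_measure.integrable_const_bound[where B=1])
      (auto simp: measurable_cong_sets[of m1 borel borel borel])
  have int_h2: "integrable m2 h2"
    using fm2 hb2 hn2 s2 by (intro finite_measure.integrable_const_bound[where B=1])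
      (auto simp: measurable_cong_sets[of m2 borel borel borel])
  have gi: "integrable m g"
    unfolding g_def using tr1[OF int_h1 hb1] tr2[OF int_h2 hb2] by auto
  define m' where "m' = density m (\<lambda>x. ennreal (norm (g x)))"
  define h' where "h' x = (if g x = 0 then 1 else g x / complex_of_real (norm (g x)))" for x
  have gm: "g \<in> borel_measurable m" using gb mb by auto
  have sm': "sets m' = sets borel" unfolding m'_def using sm by simp
  have fm': "finite_measure m'"
  proof
    have "emeasure m' (space m') = (\<integral>\<^sup>+ x. ennreal (norm (g x)) \<partial>m)"
      unfolding m'_def using gm
      by (subst emeasure_density) (auto intro!: nn_integral_cong simp: spm sm)
    also have "\<dots> < \<infinity>" using gi by (simp add: integrable_iff_bounded)
    finally show "emeasure m' (space m') \<noteq> \<infinity>" by simp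
  qed
  have hb': "h' \<in> borel_measurable borel" unfolding h'_def using gb by measurable
  have hn': "norm (h' x) = 1" for x unfolding h'_def by (auto simp: norm_divide)
  have pr: "polar_rep m' h'" unfolding polar_rep_def using sm' fm' hb' hn' by auto
  have eq: "fs_transform m1 h1 r - fs_transform m2 h2 r = fs_transform m' h' r" for r
  proof -
    let ?c = "\<lambda>x. cis (- r * x)"
    have cb: "?c \<in> borel_measurable borel" by (rule cis_meas)
    have i1: "integrable m1 (\<lambda>x. ?c x * h1 x)" by (rule fs_integrable[OF p1])
    have i2: "integrable m2 (\<lambda>x. ?c x * h2 x)" by (rule fs_integrable[OF p2])
    have b1: "(\<lambda>x. ?c x * h1 x) \<in> borel_measurable borel" using cb hb1 by measurable
    have b2: "(\<lambda>x. ?c x * h2 x) \<in> borel_measurable borel" using cb hb2 by measurable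
    have "fs_transform m1 h1 r - fs_transform m2 h2 r
        = integral\<^sup>L m (\<lambda>x. d1 x *\<^sub>R (?c x * h1 x)) - integral\<^sup>L m (\<lambda>x. d2 x *\<^sub>R (?c x * h2 x))"
      unfolding fs_transform_def using tr1[OF i1 b1] tr2[OF i2 b2] by simp
    also have "\<dots> = integral\<^sup>L m (\<lambda>x. d1 x *\<^sub>R (?c x * h1 x) - d2 x *\<^sub>R (?c x * h2 x))"
      using tr1[OF i1 b1] tr2[OF i2 b2] by (intro Bochner_Integration.integral_diff[symmetric]) auto
    also have "\<dots> = integral\<^sup>L m (\<lambda>x. norm (g x) *\<^sub>R (?c x * h' x))"
    proof (intro Bochner_Integration.integral_cong refl)
      fix x
      have "norm (g x) *\<^sub>R h' x = g x"
        unfolding h'_def by (cases "g x = 0") (auto simp: scaleR_conv_of_real)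
      then have "norm (g x) *\<^sub>R (?c x * h' x) = ?c x * g x"
        by (metis mult_scaleR_right)
      also have "\<dots> = d1 x *\<^sub>R (?c x * h1 x) - d2 x *\<^sub>R (?c x * h2 x)"
        unfolding g_def by (simp add: right_diff_distrib mult_scaleR_right)
      finally show "d1 x *\<^sub>R (?c x * h1 x) - d2 x *\<^sub>R (?c x * h2 x) = norm (g x) *\<^sub>R (?c x * h' x)"
        by (rule sym)
    qed
    also have "\<dots> = fs_transform m' h' r"
      unfolding fs_transform_def m'_def
    proof (rule integral_density[symmetric])
      show "(\<lambda>x. ?c x * h' x) \<in> borel_measurable m" unfolding mb by (rule borel_measurable_times[OF cis_meas hb'])
      show "(\<lambda>x. norm (g x)) \<in> borel_measurable m" using gm by measurable
    qed simp
    finally show ?thesis .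
  qed
  show ?thesis using pr eq by blast
qed

lemma fs_norm_ge:
  assumes p1: "polar_rep m1 h1" and p2: "polar_rep m2 h2"
    and f: "\<And>r. f r = fs_transform m1 h1 r - fs_transform m2 h2 r"
  shows "norm (f r) \<le> fs_norm f"
proof -
  obtain m h where mh: "polar_rep m h" "\<And>r. fs_transform m1 h1 r - fs_transform m2 h2 r = fs_transform m h r"
    using fs_diff_rep[OF p1 p2] by blast
  show ?thesis unfolding fs_norm_def
  proof (rule cInf_greatest)
    show "{measure m UNIV |m h. polar_rep m h \<and> (\<forall>r. f r = fs_transform m h r)} \<noteq> {}"
      using mh f by auto
  next
    fix y assume "y \<in> {measure m UNIV |m h. polar_rep m h \<and> (\<forall>r. f r = fs_transform m h r)}"
    then obtain m' h' where "y = measure m' UNIV" "polar_rep m' h'" "\<forall>r. f r = fs_transform m' h' r" by blast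
    then show "norm (f r) \<le> y" using fs_bound by metis
  qed
qed



lemma cis_interval:
  fixes \<xi> a b :: real assumes "\<xi> \<noteq> 0"
  shows "(CLBINT r=a..b. cis (- r * \<xi>)) = \<i> * (cis (- b * \<xi>) - cis (- a * \<xi>)) / complex_of_real \<xi>"
proof -
  have "(CLBINT r=a..b. cis (- r * \<xi>)) = (\<lambda>r. \<i> * cis (- r * \<xi>) / complex_of_real \<xi>) b - (\<lambda>r. \<i> * cis (- r * \<xi>) / complex_of_real \<xi>) a"
  proof (rule interval_integral_FTC_finite)
    show "continuous_on {min a b..max a b} (\<lambda>r. cis (- r * \<xi>))"
      by (intro continuous_intros)
    fix x
    have "((\<lambda>r. \<i> * exp (\<i> * complex_of_real (- r * \<xi>)) / complex_of_real \<xi>) has_vector_derivative exp (\<i> * complex_of_real (- x * \<xi>))) (at x within {min a b..max a b})"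
      using assms by (auto intro!: derivative_eq_intros simp: Re_exp Im_exp has_vector_derivative_complex_iff field_simps)
    then show "((\<lambda>r. \<i> * cis (- r * \<xi>) / complex_of_real \<xi>) has_vector_derivative cis (- x * \<xi>)) (at x within {min a b..max a b})"
      by (simp add: cis_conv_exp)
  qed
  then show ?thesis by (simp add: diff_divide_distrib algebra_simps)
qed



lemma cis_borel[measurable]: "cis \<in> borel_measurable borel"
  by (intro borel_measurable_continuous_onI continuous_intros)

definition Kf :: "real \<Rightarrow> real \<Rightarrow> complex" where
  "Kf R \<xi> = (if \<xi> = 0 then complex_of_real (2 * R) else \<i> * (cis (- R * \<xi>) - cis (R * \<xi>)) / complex_of_real \<xi>)"

lemma Kf_meas[measurable]: "Kf R \<in> borel_measurable borel"
  unfolding Kf_def by measurable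

lemma k_eq_Kf:
  assumes R: "0 \<le> R"
  shows "(\<integral>r. indicator {-R..R} r *\<^sub>R cis (- r * \<xi>) \<partial>lborel) = Kf R \<xi>"
proof (cases "\<xi> = 0")
  case True
  have "(\<integral>r. indicator {-R..R} r *\<^sub>R cis (- r * \<xi>) \<partial>lborel) = (\<integral>r. indicator {-R..R} r *\<^sub>R (1::complex) \<partial>lborel)"
    using True by simp
  also have "\<dots> = measure lborel {-R..R} *\<^sub>R 1"
    using R by (intro has_bochner_integral_integral_eq has_bochner_integral_indicator) auto
  also have "\<dots> = Kf R \<xi>" using True R by (simp add: Kf_def scaleR_conv_of_real)
  finally show ?thesis .
next
  case False
  have "(\<integral>r. indicator {-R..R} r *\<^sub>R cis (- r * \<xi>) \<partial>lborel) = (CLBINT r:{-R..R}. cis (- r * \<xi>))"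
    by (simp add: set_lebesgue_integral_def)
  also have "\<dots> = (CLBINT r=-R..R. cis (- r * \<xi>))"
    using R by (simp add: interval_integral_Icc)
  also have "\<dots> = Kf R \<xi>"
    unfolding cis_interval[OF False] Kf_def using False by simp
  finally show ?thesis .
qed

lemma Kf_bound:
  assumes R: "0 \<le> R" shows "norm (Kf R \<xi>) \<le> 2 * R"
proof -
  have "norm (Kf R \<xi>) = norm (\<integral>r. indicator {-R..R} r *\<^sub>R cis (- r * \<xi>) \<partial>lborel)"
    using k_eq_Kf[OF R] by simp
  also have "\<dots> \<le> (\<integral>r. norm (indicator {-R..R} r *\<^sub>R cis (- r * \<xi>)) \<partial>lborel)"
    by (rule integral_norm_bound)
  also have "\<dots> = (\<integral>r. indicator {-R..R} r \<partial>lborel)"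
    by (intro Bochner_Integration.integral_cong) (auto simp: indicator_def)
  also have "\<dots> = 2 * R" using R by simp
  finally show ?thesis .
qed

lemma Kf_bound2:
  assumes "\<xi> \<noteq> 0" shows "norm (Kf R \<xi>) \<le> 2 / \<bar>\<xi>\<bar>"
proof -
  have "norm (cis (- R * \<xi>) - cis (R * \<xi>)) \<le> 2"
    using norm_triangle_ineq4[of "cis (- R * \<xi>)" "cis (R * \<xi>)"] by simp
  then show ?thesis using assms
    by (simp add: Kf_def norm_divide norm_mult divide_right_mono)
qed

lemma fs_avg_fubini:
  assumes p: "polar_rep m h" and R: "0 \<le> R"
  shows "(\<integral>r. indicator {-R..R} r *\<^sub>R fs_transform m h r \<partial>lborel) = (\<integral>\<xi>. Kf R \<xi> * h \<xi> \<partial>m)"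
proof -
  interpret m: finite_measure m using p by (simp add: polar_rep_def)
  interpret pair_sigma_finite lborel m by unfold_locales
  have sm: "sets m = sets borel" and hb: "h \<in> borel_measurable borel" and hn: "\<And>x. norm (h x) = 1"
    using p by (auto simp: polar_rep_def)
  define f where "f r \<xi> = indicator {-R..R} r *\<^sub>R (cis (- r * \<xi>) * h \<xi>)" for r \<xi>
  have sp: "sets (lborel \<Otimes>\<^sub>M m) = sets (borel \<Otimes>\<^sub>M borel)"
    using sm by (intro sets_pair_measure_cong) auto
  have fmeas: "case_prod f \<in> borel_measurable (lborel \<Otimes>\<^sub>M m)"
  proof -
    have "case_prod f \<in> borel_measurable (borel \<Otimes>\<^sub>M borel)"
      unfolding f_def using hb by measurable
    then show ?thesis by (simp only: measurable_cong_sets[OF sp refl])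
  qed
  have fint: "integrable (lborel \<Otimes>\<^sub>M m) (case_prod f)"
  proof (rule Bochner_Integration.integrable_bound)
    have "{-R..R} \<times> UNIV \<in> sets (lborel \<Otimes>\<^sub>M m)"
      using sm by (intro pair_measureI) auto
    moreover have "emeasure (lborel \<Otimes>\<^sub>M m) ({-R..R} \<times> UNIV) < \<infinity>"
    proof -
      have "emeasure (lborel \<Otimes>\<^sub>M m) ({-R..R} \<times> UNIV) = emeasure lborel {-R..R} * emeasure m UNIV"
        using sm by (intro m.emeasure_pair_measure_Times) auto
      also have "\<dots> < \<infinity>"
      proof -
        have a: "emeasure m UNIV < \<top>" using m.emeasure_finite[of UNIV] less_top by blast
        have b: "emeasure lborel {-R..R} < \<top>" using R by simp
        show ?thesis using a b by (simp add: ennreal_mult_less_top)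
      qed
      finally show ?thesis .
    qed
    ultimately show "integrable (lborel \<Otimes>\<^sub>M m) (indicator ({-R..R} \<times> UNIV) :: real \<times> real \<Rightarrow> real)"
      by (rule integrable_real_indicator)
    show "case_prod f \<in> borel_measurable (lborel \<Otimes>\<^sub>M m)" by (rule fmeas)
    show "AE x in lborel \<Otimes>\<^sub>M m. norm (case_prod f x) \<le> norm (indicator ({-R..R} \<times> UNIV) x :: real)"
      by (intro AE_I2) (auto simp: f_def indicator_def norm_mult hn)
  qed
  have "(\<integral>r. indicator {-R..R} r *\<^sub>R fs_transform m h r \<partial>lborel) = (\<integral>r. (\<integral>\<xi>. f r \<xi> \<partial>m) \<partial>lborel)"
    unfolding fs_transform_def f_def by simp
  also have "\<dots> = (\<integral>\<xi>. (\<integral>r. f r \<xi> \<partial>lborel) \<partial>m)"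
    by (rule Fubini_integral[OF fint, symmetric])
  also have "\<dots> = (\<integral>\<xi>. Kf R \<xi> * h \<xi> \<partial>m)"
  proof (intro Bochner_Integration.integral_cong refl)
    fix \<xi>
    have "(\<integral>r. f r \<xi> \<partial>lborel) = (\<integral>r. (indicator {-R..R} r *\<^sub>R cis (- r * \<xi>)) * h \<xi> \<partial>lborel)"
      unfolding f_def by (simp add: scaleR_conv_of_real mult.assoc)
    also have "\<dots> = (\<integral>r. indicator {-R..R} r *\<^sub>R cis (- r * \<xi>) \<partial>lborel) * h \<xi>"
      by (rule integral_mult_left_zero)
    also have "\<dots> = Kf R \<xi> * h \<xi>" using k_eq_Kf[OF R] by simp
    finally show "(\<integral>r. f r \<xi> \<partial>lborel) = Kf R \<xi> * h \<xi>" .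
  qed
  finally show ?thesis .
qed



lemma fs_avg_lim:
  assumes p: "polar_rep m h"
  shows "((\<lambda>R. complex_of_real (1 / (2 * R)) * (\<integral>r. indicator {-R..R} r *\<^sub>R fs_transform m h r \<partial>lborel))
           \<longlongrightarrow> h 0 * complex_of_real (measure m {0})) at_top"
proof -
  interpret m: finite_measure m using p by (simp add: polar_rep_def)
  have sm: "sets m = sets borel" and hb: "h \<in> borel_measurable borel" and hn: "\<And>x. norm (h x) = 1"
    using p by (auto simp: polar_rep_def)
  have mb: "f \<in> borel_measurable m \<longleftrightarrow> f \<in> borel_measurable borel" for f :: "real \<Rightarrow> 'z::topological_space"
    using sm measurable_cong_sets[of m borel borel borel] by auto
  define s where "s R \<xi> = complex_of_real (1 / (2 * R)) * Kf R \<xi> * h \<xi>" for R \<xi>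
  define f :: "real \<Rightarrow> complex" where "f \<xi> = indicator {0::real} \<xi> *\<^sub>R h 0" for \<xi>
  have ev: "\<forall>\<^sub>F R in at_top. (\<integral>\<xi>. s R \<xi> \<partial>m) =
      complex_of_real (1 / (2 * R)) * (\<integral>r. indicator {-R..R} r *\<^sub>R fs_transform m h r \<partial>lborel)"
  proof (rule eventually_mono[OF eventually_ge_at_top[of 0]])
    fix R :: real assume R: "0 \<le> R"
    show "(\<integral>\<xi>. s R \<xi> \<partial>m) = complex_of_real (1 / (2 * R)) * (\<integral>r. indicator {-R..R} r *\<^sub>R fs_transform m h r \<partial>lborel)"
      unfolding fs_avg_fubini[OF p R] s_def by (simp add: mult.assoc)
  qed
  have lim: "((\<lambda>R. \<integral>\<xi>. s R \<xi> \<partial>m) \<longlongrightarrow> integral\<^sup>L m f) at_top"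
  proof (rule integral_dominated_convergence_at_top[where w="\<lambda>_. 1"])
    show "f \<in> borel_measurable m" unfolding mb f_def by measurable
    show "s t \<in> borel_measurable m" for t unfolding mb s_def using hb by measurable
    show "integrable m (\<lambda>_. 1::real)" by simp
    show "\<forall>\<^sub>F i in at_top. AE x in m. norm (s i x) \<le> 1"
    proof (rule eventually_mono[OF eventually_gt_at_top[of 0]], intro AE_I2)
      fix R :: real and x assume R: "0 < R"
      have "norm (s R x) = norm (Kf R x) / (2 * R)" using R by (simp add: s_def norm_mult norm_divide hn)
      also have "\<dots> \<le> 2 * R / (2 * R)" using Kf_bound[of R x] R by (intro divide_right_mono) auto
      also have "\<dots> = 1" using R by simp
      finally show "norm (s R x) \<le> 1" .
    qed
    show "AE x in m. ((\<lambda>i. s i x) \<longlongrightarrow> f x) at_top"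
    proof (intro AE_I2)
      fix x :: real
      show "((\<lambda>i. s i x) \<longlongrightarrow> f x) at_top"
      proof (cases "x = 0")
        case True
        have "\<forall>\<^sub>F R in at_top. s R x = f x"
          using eventually_gt_at_top[of "0::real"]
          by eventually_elim (simp add: True s_def Kf_def f_def)
        then show ?thesis by (rule tendsto_eventually)
      next
        case False
        have "((\<lambda>R. s R x) \<longlongrightarrow> 0) at_top"
        proof (rule Lim_null_comparison)
          show "\<forall>\<^sub>F R in at_top. norm (s R x) \<le> (2 / \<bar>x\<bar>) * inverse (2 * R)"
            using eventually_gt_at_top[of "0::real"]
          proof eventually_elim
            case (elim R)
            have "norm (s R x) = norm (Kf R x) * inverse (2 * R)" using elim by (simp add: s_def norm_mult norm_divide hn field_simps)
            also have "\<dots> \<le> (2 / \<bar>x\<bar>) * inverse (2 * R)"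
              using Kf_bound2[OF False, of R] elim by (intro mult_right_mono) auto
            finally show ?case .
          qed
          show "((\<lambda>R. (2 / \<bar>x\<bar>) * inverse (2 * R)) \<longlongrightarrow> 0) at_top"
            by (intro tendsto_mult_right_zero tendsto_inverse_0_at_top filterlim_tendsto_pos_mult_at_top[OF tendsto_const]) (auto intro: filterlim_ident)
        qed
        then show ?thesis using False by (simp add: f_def)
      qed
    qed
  qed
  have fi: "integral\<^sup>L m f = measure m {0} *\<^sub>R h 0"
    unfolding f_def using sm by (intro has_bochner_integral_integral_eq has_bochner_integral_indicator) (auto simp: less_top[symmetric])
  show ?thesis
    using Lim_transform_eventually[OF lim ev] fi by (simp add: scaleR_conv_of_real mult.commute)
qed



lemma fs_meas:
  assumes p: "polar_rep m h"
  shows "(\<lambda>r. fs_transform m h r) \<in> borel_measurable borel"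
proof -
  interpret m: finite_measure m using p by (simp add: polar_rep_def)
  have sm: "sets m = sets borel" and hb: "h \<in> borel_measurable borel"
    using p by (auto simp: polar_rep_def)
  have sp: "sets (borel \<Otimes>\<^sub>M m) = sets (borel \<Otimes>\<^sub>M borel)"
    using sm by (intro sets_pair_measure_cong) auto
  have "(\<lambda>(r, \<xi>). cis (- r * \<xi>) * h \<xi>) \<in> borel_measurable (borel \<Otimes>\<^sub>M borel)"
    using hb by measurable
  then have "(\<lambda>(r, \<xi>). cis (- r * \<xi>) * h \<xi>) \<in> borel_measurable (borel \<Otimes>\<^sub>M m)"
    by (simp only: measurable_cong_sets[OF sp refl])
  then show ?thesis unfolding fs_transform_def by (rule m.borel_measurable_lebesgue_integral)
qed

lemma map_meas: "(\<lambda>x::int \<Rightarrow> nat. map x L) \<in> measurable (Pi\<^sub>M UNIV (\<lambda>_. count_space UNIV)) (count_space UNIV)"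
proof (induction L)
  case Nil
  then show ?case by simp
next
  case (Cons a L)
  have "(\<lambda>x::int \<Rightarrow> nat. (x a, map x L)) \<in> measurable (Pi\<^sub>M UNIV (\<lambda>_. count_space UNIV)) (count_space UNIV \<Otimes>\<^sub>M count_space UNIV)"
    using Cons by (intro measurable_Pair) auto
  then have "(\<lambda>x::int \<Rightarrow> nat. (x a, map x L)) \<in> measurable (Pi\<^sub>M UNIV (\<lambda>_. count_space UNIV)) (count_space UNIV)"
    by (simp add: pair_measure_countable)
  moreover have "(\<lambda>p::nat \<times> nat list. fst p # snd p) \<in> measurable (count_space UNIV) (count_space UNIV)"
    by simp
  ultimately have "(\<lambda>p::nat \<times> nat list. fst p # snd p) \<circ> (\<lambda>x::int \<Rightarrow> nat. (x a, map x L)) \<in> measurable (Pi\<^sub>M UNIV (\<lambda>_. count_space UNIV)) (count_space UNIV)"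
    by (rule measurable_comp)
  then show ?case by (simp add: comp_def)
qed

lemma dtheta_nonneg: "0 < \<theta> \<Longrightarrow> 0 \<le> dtheta \<theta> x y"
  by (simp add: dtheta_def)

lemma dtheta_le1: "0 < \<theta> \<Longrightarrow> \<theta> < 1 \<Longrightarrow> dtheta \<theta> x y \<le> 1"
  by (simp add: dtheta_def power_le_one)

lemma dtheta_agree:
  assumes t: "0 < \<theta>" "\<theta> < 1" and agree: "\<And>i. \<bar>i\<bar> \<le> int n \<Longrightarrow> x i = y i"
  shows "dtheta \<theta> x y \<le> \<theta> ^ n"
proof (cases "x = y")
  case True then show ?thesis using t by (simp add: dtheta_def)
next
  case False
  then obtain i0 where i0: "x i0 \<noteq> y i0" by auto
  let ?P = "\<lambda>j::nat. \<forall>i. \<bar>i\<bar> < int j \<longrightarrow> x i = y i"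
  have Pn: "?P n" using agree by auto
  have bnd: "\<And>j. ?P j \<Longrightarrow> j \<le> nat \<bar>i0\<bar>"
  proof -
    fix j assume "?P j"
    then have "\<not> \<bar>i0\<bar> < int j" using i0 by auto
    then show "j \<le> nat \<bar>i0\<bar>" by auto
  qed
  have "n \<le> (GREATEST j. ?P j)" by (rule Greatest_le_nat[of ?P n "nat \<bar>i0\<bar>", OF Pn bnd])
  then have "\<theta> ^ (GREATEST j. ?P j) \<le> \<theta> ^ n" using t by (intro power_decreasing) auto
  then show ?thesis using False by (simp add: dtheta_def)
qed

lemma powr_pow_tendsto:
  fixes \<theta> \<alpha> :: real
  assumes t: "0 < \<theta>" "\<theta> < 1" and a: "0 < \<alpha>"
  shows "(\<lambda>n. (\<theta> ^ n) powr \<alpha>) \<longlonglongrightarrow> 0"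
proof -
  have eq: "(\<theta> ^ n) powr \<alpha> = (\<theta> powr \<alpha>) ^ n" for n
  proof -
    have "(\<theta> ^ n) powr \<alpha> = (\<theta> powr real n) powr \<alpha>" using t by (simp add: powr_realpow)
    also have "\<dots> = (\<theta> powr \<alpha>) powr real n" by (simp add: powr_powr mult.commute)
    also have "\<dots> = (\<theta> powr \<alpha>) ^ n" using t by (simp add: powr_realpow)
    finally show ?thesis .
  qed
  have "0 \<le> \<theta> powr \<alpha>" "\<theta> powr \<alpha> < 1" using t a powr_less_mono2[of \<alpha> \<theta> 1] by auto
  then show ?thesis unfolding eq by (intro LIMSEQ_power_zero) auto
qed



theorem lemma3p6:
  fixes k :: nat and A :: "nat \<Rightarrow> nat \<Rightarrow> bool" and \<theta> :: real
    and \<mu> :: "(int \<Rightarrow> nat) measure" and \<phi> :: "(int \<Rightarrow> nat) \<Rightarrow> real"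
    and \<Phi> :: "(int \<Rightarrow> nat) \<Rightarrow> real \<Rightarrow> complex"
    and M :: "(int \<Rightarrow> nat) \<Rightarrow> real measure" and H :: "(int \<Rightarrow> nat) \<Rightarrow> real \<Rightarrow> complex"
  assumes "topologically_mixing (sft k A)"
    and "gibbs_measure \<theta> (sft k A) \<mu> \<phi>"
    and "0 < \<theta>" and "\<theta> < 1"
    and "in_G \<theta> (sft k A) \<Phi> M H"
  shows "global_observable (\<mu> \<Otimes>\<^sub>M lborel) (\<lambda>(x, r). \<Phi> x r) \<and>
         nu_av (\<mu> \<Otimes>\<^sub>M lborel) (\<lambda>(x, r). \<Phi> x r) =
           (\<integral>x. H x 0 * complex_of_real (measure (M x) {0}) \<partial>\<mu>)"
proof -
  define S where "S = sft k A"
  have t: "0 < \<theta>" "\<theta> < 1" using assms(3,4) .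
  have gsets: "sets \<mu> = sets (shift_space S)" and gspace: "space \<mu> = S" and gone: "emeasure \<mu> (space \<mu>) = 1"
    using assms(2) unfolding gibbs_measure_def S_def by auto
  have rep: "\<And>x. x \<in> S \<Longrightarrow> polar_rep (M x) (H x)"
    and phieq: "\<And>x r. x \<in> S \<Longrightarrow> \<Phi> x r = fs_transform (M x) (H x) r"
    using assms(5) unfolding in_G_def S_def by auto
  obtain C \<alpha> where a: "\<alpha> > 0"
    and hold: "\<And>x y. x \<in> S \<Longrightarrow> y \<in> S \<Longrightarrow> fs_norm (\<lambda>r. \<Phi> x r - \<Phi> y r) \<le> C * dtheta \<theta> x y powr \<alpha>"
    using assms(5) unfolding in_G_def S_def by blast
  have Sne: "S \<noteq> {}"
  proof
    assume "S = {}" then show False using gone gspace by simp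
  qed
  then obtain x0 where x0: "x0 \<in> S" by blast
  interpret mu: finite_measure \<mu>
    by (rule finite_measureI) (simp add: gone)
  interpret P: pair_sigma_finite \<mu> lborel by unfold_locales
  let ?\<nu> = "\<mu> \<Otimes>\<^sub>M lborel"
  define F where "F = (\<lambda>(x, r). \<Phi> x r)"
  have Fp: "F p = \<Phi> (fst p) (snd p)" for p unfolding F_def by (simp add: case_prod_beta)
  have spnu: "space ?\<nu> = S \<times> UNIV" by (simp add: space_pair_measure gspace)
  have diff: "norm (\<Phi> x r - \<Phi> y r) \<le> \<bar>C\<bar> * dtheta \<theta> x y powr \<alpha>" if "x \<in> S" "y \<in> S" for x y r
  proof -
    have "norm (\<Phi> x r - \<Phi> y r) \<le> fs_norm (\<lambda>r. \<Phi> x r - \<Phi> y r)"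
      by (rule fs_norm_ge[OF rep[OF that(1)] rep[OF that(2)]]) (simp add: phieq that)
    also have "\<dots> \<le> C * dtheta \<theta> x y powr \<alpha>" by (rule hold[OF that])
    also have "\<dots> \<le> \<bar>C\<bar> * dtheta \<theta> x y powr \<alpha>" by (intro mult_right_mono) auto
    finally show ?thesis .
  qed
  define B where "B = measure (M x0) UNIV + \<bar>C\<bar>"
  have bnd: "norm (\<Phi> x r) \<le> B" if "x \<in> S" for x r
  proof -
    have d1: "dtheta \<theta> x x0 powr \<alpha> \<le> 1"
      using dtheta_nonneg[OF t(1)] dtheta_le1[OF t] a by (intro powr_le1) auto
    have "norm (\<Phi> x r) \<le> norm (\<Phi> x0 r) + norm (\<Phi> x r - \<Phi> x0 r)"
      by (metis add.commute diff_add_cancel norm_triangle_ineq)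
    also have "\<dots> \<le> measure (M x0) UNIV + \<bar>C\<bar> * 1"
    proof (rule add_mono)
      show "norm (\<Phi> x0 r) \<le> measure (M x0) UNIV"
        using fs_bound[OF rep[OF x0], of r] phieq[OF x0] by simp
      have "\<bar>C\<bar> * dtheta \<theta> x x0 powr \<alpha> \<le> \<bar>C\<bar> * 1" using d1 by (intro mult_left_mono) auto
      then show "norm (\<Phi> x r - \<Phi> x0 r) \<le> \<bar>C\<bar> * 1" using diff[OF that x0, of r] by linarith
    qed
    finally show ?thesis by (simp add: B_def)
  qed
  have Bnn: "0 \<le> B" using bnd[OF x0, of 0] norm_ge_zero order.trans by blast
  have snu: "sets ?\<nu> = sets (shift_space S \<Otimes>\<^sub>M borel)"
    using gsets by (intro sets_pair_measure_cong) auto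
  define L where "L n = [- int n..int n]" for n
  define rp where "rp n l = (if \<exists>y\<in>S. map y (L n) = l then (SOME y. y \<in> S \<and> map y (L n) = l) else x0)" for n l
  have rp_in: "rp n l \<in> S" for n l
  proof (cases "\<exists>y\<in>S. map y (L n) = l")
    case True
    then obtain y where y: "y \<in> S \<and> map y (L n) = l" by blast
    have "(SOME y. y \<in> S \<and> map y (L n) = l) \<in> S" by (rule someI2[where P="\<lambda>y. y \<in> S \<and> map y (L n) = l" and a=y, OF y]) simp
    then show ?thesis using True by (simp add: rp_def)
  next
    case False then show ?thesis using x0 by (simp add: rp_def)
  qed
  have rp_agree: "rp n (map x (L n)) i = x i" if "x \<in> S" "\<bar>i\<bar> \<le> int n" for x n i
  proof -
    have ex: "\<exists>y\<in>S. map y (L n) = map x (L n)" using that by blast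
    have y: "x \<in> S \<and> map x (L n) = map x (L n)" using that by simp
    have "map (SOME y. y \<in> S \<and> map y (L n) = map x (L n)) (L n) = map x (L n)"
      by (rule someI2[where P="\<lambda>y. y \<in> S \<and> map y (L n) = map x (L n)" and a=x, OF y]) simp
    moreover have "rp n (map x (L n)) = (SOME y. y \<in> S \<and> map y (L n) = map x (L n))"
      by (simp only: rp_def if_P[OF ex])
    ultimately have "map (rp n (map x (L n))) (L n) = map x (L n)" by simp
    moreover have "i \<in> set (L n)" using that by (auto simp: L_def)
    ultimately show ?thesis by (simp add: map_eq_conv)
  qed
  define Fn where "Fn n p = \<Phi> (rp n (map (fst p) (L n))) (snd p)" for n p
  have mapmeas: "(\<lambda>x::int \<Rightarrow> nat. map x (L n)) \<in> measurable \<mu> (count_space UNIV)" for n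
  proof -
    have "(\<lambda>x::int \<Rightarrow> nat. map x (L n)) \<in> measurable (shift_space S) (count_space UNIV)"
      unfolding shift_space_def by (rule measurable_restrict_space1[OF map_meas])
    then show ?thesis by (simp only: measurable_cong_sets[OF gsets refl])
  qed
  have phimeas: "(\<lambda>r. \<Phi> y r) \<in> borel_measurable borel" if "y \<in> S" for y
  proof -
    have "(\<lambda>r. \<Phi> y r) = (\<lambda>r. fs_transform (M y) (H y) r)" using phieq[OF that] by auto
    then show ?thesis using fs_meas[OF rep[OF that]] by simp
  qed
  have Fn_meas: "Fn n \<in> borel_measurable ?\<nu>" for n
  proof -
    have "(\<lambda>p. (\<lambda>l p. \<Phi> (rp n l) (snd p)) (map (fst p) (L n)) p) \<in> borel_measurable ?\<nu>"
    proof (rule measurable_compose_countable)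
      fix l :: "nat list"
      show "(\<lambda>p. \<Phi> (rp n l) (snd p)) \<in> borel_measurable ?\<nu>"
      proof -
        have "(\<lambda>r. \<Phi> (rp n l) r) \<in> borel_measurable lborel" using phimeas[OF rp_in] by simp
        from measurable_compose[OF measurable_snd this] show ?thesis by assumption
      qed
    next
      show "(\<lambda>p. map (fst p) (L n)) \<in> measurable ?\<nu> (count_space UNIV)"
        by (rule measurable_compose[OF measurable_fst mapmeas])
    qed
    then show ?thesis unfolding Fn_def by simp
  qed
  have Flim: "(\<lambda>n. Fn n p) \<longlonglongrightarrow> F p" if pin: "p \<in> space ?\<nu>" for p
  proof -
    obtain x r where p: "p = (x, r)" and x: "x \<in> S" using pin spnu by (cases p) auto
    have "(\<lambda>n. Fn n p - F p) \<longlonglongrightarrow> 0"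
    proof (rule Lim_null_comparison)
      show "\<forall>\<^sub>F n in sequentially. norm (Fn n p - F p) \<le> \<bar>C\<bar> * (\<theta> ^ n) powr \<alpha>"
      proof (intro always_eventually allI)
        fix n
        have "norm (Fn n p - F p) \<le> \<bar>C\<bar> * dtheta \<theta> (rp n (map x (L n))) x powr \<alpha>"
          unfolding Fn_def Fp p using diff[OF rp_in x] by simp
        also have "\<dots> \<le> \<bar>C\<bar> * (\<theta> ^ n) powr \<alpha>"
          using dtheta_agree[OF t, of n "rp n (map x (L n))" x] rp_agree[OF x] dtheta_nonneg[OF t(1)] a
          by (intro mult_left_mono powr_mono2) auto
        finally show "norm (Fn n p - F p) \<le> \<bar>C\<bar> * (\<theta> ^ n) powr \<alpha>" .
      qed
      show "(\<lambda>n. \<bar>C\<bar> * (\<theta> ^ n) powr \<alpha>) \<longlonglongrightarrow> 0"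
        by (rule tendsto_mult_right_zero[OF powr_pow_tendsto[OF t a]])
    qed
    then show ?thesis by (rule LIM_zero_cancel)
  qed
  have Fmeas: "F \<in> borel_measurable ?\<nu>"
    by (rule borel_measurable_LIMSEQ_metric[OF Fn_meas Flim])
  have Fbnd: "norm (F p) \<le> B" if pin: "p \<in> space ?\<nu>" for p
  proof -
    have "fst p \<in> S" using pin unfolding spnu by (cases p) auto
    then show ?thesis using bnd by (simp add: Fp)
  qed
  define s where "s R x = complex_of_real (1 / (2 * R)) * (\<integral>r. indicator {-R..R} r *\<^sub>R \<Phi> x r \<partial>lborel)" for R x
  have phi_int: "integrable lborel (\<lambda>r. indicator {-R..R} r *\<^sub>R \<Phi> x r)" if x: "x \<in> S" for x R
  proof (rule Bochner_Integration.integrable_bound)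
    show "integrable lborel (\<lambda>r. B * indicator {-R..R} r :: real)"
    proof (intro integrable_mult_right integrable_real_indicator)
      show "emeasure lborel {-R..R} < \<infinity>" by (cases "-R \<le> R") auto
    qed auto
    show "(\<lambda>r. indicator {-R..R} r *\<^sub>R \<Phi> x r) \<in> borel_measurable lborel"
      using phimeas[OF x] by simp
    show "AE r in lborel. norm (indicator {-R..R} r *\<^sub>R \<Phi> x r) \<le> norm (B * indicator {-R..R} r :: real)"
      using bnd[OF x] Bnn by (intro AE_I2) (auto simp: indicator_def)
  qed
  have win: "window_avg ?\<nu> F R = (\<integral>x. s R x \<partial>\<mu>)" if R: "0 \<le> R" for R
  proof -
    have W: "{p \<in> space ?\<nu>. \<bar>snd p\<bar> \<le> R} = S \<times> {-R..R}"
      using spnu by auto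
    have Wsets: "S \<times> {-R..R} \<in> sets ?\<nu>"
      using gspace by (intro pair_measureI) (auto simp flip: gspace)
    have Wfin: "emeasure ?\<nu> (S \<times> {-R..R}) < \<infinity>"
    proof -
      have "emeasure ?\<nu> (S \<times> {-R..R}) = emeasure \<mu> S * emeasure lborel {-R..R}"
        by (rule lborel.emeasure_pair_measure_Times) (auto simp flip: gspace)
      also have "\<dots> < \<infinity>" using R gone gspace by (simp add: ennreal_mult_less_top)
      finally show ?thesis .
    qed
    define G where "G p = indicator (S \<times> {-R..R}) p *\<^sub>R F p" for p
    have Gint: "integrable ?\<nu> G"
    proof (rule Bochner_Integration.integrable_bound)
      show "integrable ?\<nu> (\<lambda>p. B * indicator (S \<times> {-R..R}) p :: real)"
        using Wsets Wfin by (intro integrable_mult_right integrable_real_indicator)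
      show "G \<in> borel_measurable ?\<nu>"
        unfolding G_def using Wsets Fmeas by (intro borel_measurable_scaleR borel_measurable_indicator)
      show "AE p in ?\<nu>. norm (G p) \<le> norm (B * indicator (S \<times> {-R..R}) p :: real)"
        using Fbnd Bnn by (intro AE_I2) (auto simp: G_def indicator_def)
    qed
    have "window_avg ?\<nu> F R = complex_of_real (1 / (2 * R)) * integral\<^sup>L ?\<nu> G"
      unfolding window_avg_def set_lebesgue_integral_def W G_def ..
    also have "integral\<^sup>L ?\<nu> G = (\<integral>x. (\<integral>r. G (x, r) \<partial>lborel) \<partial>\<mu>)"
      by (rule P.integral_fst'[OF Gint, symmetric])
    also have "\<dots> = (\<integral>x. (\<integral>r. indicator {-R..R} r *\<^sub>R \<Phi> x r \<partial>lborel) \<partial>\<mu>)"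
    proof (rule Bochner_Integration.integral_cong[OF refl])
      fix x assume "x \<in> space \<mu>"
      then have x: "x \<in> S" using gspace by simp
      show "(\<integral>r. G (x, r) \<partial>lborel) = (\<integral>r. indicator {-R..R} r *\<^sub>R \<Phi> x r \<partial>lborel)"
        using x by (intro Bochner_Integration.integral_cong refl) (simp add: G_def F_def indicator_def)
    qed
    also have "complex_of_real (1 / (2 * R)) * \<dots> = (\<integral>x. s R x \<partial>\<mu>)"
      unfolding s_def by simp
    finally show ?thesis .
  qed
  define f where "f x = H x 0 * complex_of_real (measure (M x) {0})" for x
  have slim: "((\<lambda>R. s R x) \<longlongrightarrow> f x) at_top" if x: "x \<in> S" for x
  proof -
    have "(\<lambda>R. s R x) = (\<lambda>R. complex_of_real (1 / (2 * R)) * (\<integral>r. indicator {-R..R} r *\<^sub>R fs_transform (M x) (H x) r \<partial>lborel))"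
      unfolding s_def using phieq[OF x] by simp
    then show ?thesis using fs_avg_lim[OF rep[OF x]] by (simp add: f_def)
  qed
  have smeas: "s R \<in> borel_measurable \<mu>" for R
  proof -
    have "(\<lambda>p. indicator {-R..R} (snd p) *\<^sub>R F p) \<in> borel_measurable ?\<nu>"
      using Fmeas by measurable
    then have "case_prod (\<lambda>x r. indicator {-R..R} r *\<^sub>R \<Phi> x r) \<in> borel_measurable ?\<nu>"
      by (simp add: Fp case_prod_beta')
    then have "(\<lambda>x. \<integral>r. indicator {-R..R} r *\<^sub>R \<Phi> x r \<partial>lborel) \<in> borel_measurable \<mu>"
      by (rule lborel.borel_measurable_lebesgue_integral)
    then show ?thesis unfolding s_def by (intro borel_measurable_times borel_measurable_const)
  qed
  have fmeas: "f \<in> borel_measurable \<mu>"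
  proof (rule borel_measurable_LIMSEQ_metric[where f="\<lambda>n. s (real n)"])
    show "s (real i) \<in> borel_measurable \<mu>" for i by (rule smeas)
    fix x assume "x \<in> space \<mu>"
    then have x: "x \<in> S" using gspace by simp
    show "(\<lambda>i. s (real i) x) \<longlonglongrightarrow> f x"
      by (rule filterlim_compose[OF slim[OF x] filterlim_real_sequentially])
  qed
  have lim: "((\<lambda>R. \<integral>x. s R x \<partial>\<mu>) \<longlongrightarrow> integral\<^sup>L \<mu> f) at_top"
  proof (rule integral_dominated_convergence_at_top[where w="\<lambda>_. B"])
    show "f \<in> borel_measurable \<mu>" by (rule fmeas)
    show "s t \<in> borel_measurable \<mu>" for t by (rule smeas)
    show "integrable \<mu> (\<lambda>_. B)" by simp
    show "AE x in \<mu>. ((\<lambda>i. s i x) \<longlongrightarrow> f x) at_top"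
      using slim gspace by (intro AE_I2) auto
    show "\<forall>\<^sub>F i in at_top. AE x in \<mu>. norm (s i x) \<le> B"
    proof (rule eventually_mono[OF eventually_gt_at_top[of 0]], intro AE_I2)
      fix R :: real and x assume R: "0 < R" and "x \<in> space \<mu>"
      then have x: "x \<in> S" using gspace by simp
      have iB: "integrable lborel (\<lambda>r. B * indicator {-R..R} r :: real)"
        using R by (intro integrable_mult_right integrable_real_indicator) auto
      have "norm (\<integral>r. indicator {-R..R} r *\<^sub>R \<Phi> x r \<partial>lborel) \<le> (\<integral>r. B * indicator {-R..R} r \<partial>lborel)"
        by (rule Bochner_Integration.integral_norm_bound_integral[OF phi_int[OF x] iB])
          (use bnd[OF x] Bnn in \<open>auto simp: indicator_def\<close>)
      also have "\<dots> = B * (2 * R)" using R by simp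
      finally have n: "norm (\<integral>r. indicator {-R..R} r *\<^sub>R \<Phi> x r \<partial>lborel) \<le> B * (2 * R)" .
      have "norm (s R x) = norm (\<integral>r. indicator {-R..R} r *\<^sub>R \<Phi> x r \<partial>lborel) / (2 * R)"
        using R by (simp add: s_def norm_mult norm_divide)
      also have "\<dots> \<le> B * (2 * R) / (2 * R)" using n R by (intro divide_right_mono) auto
      also have "\<dots> = B" using R by simp
      finally show "norm (s R x) \<le> B" .
    qed
  qed
  have ev: "\<forall>\<^sub>F R in at_top. (\<integral>x. s R x \<partial>\<mu>) = window_avg ?\<nu> F R"
    using eventually_ge_at_top[of "0::real"] by eventually_elim (simp add: win)
  have wlim: "(window_avg ?\<nu> F \<longlongrightarrow> integral\<^sup>L \<mu> f) at_top"
    by (rule Lim_transform_eventually[OF lim ev])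
  have Fdef: "(\<lambda>(x, r). \<Phi> x r) = F" by (simp add: F_def)
  have go: "global_observable ?\<nu> F"
    unfolding global_observable_def
  proof (intro conjI exI)
    show "F \<in> borel_measurable ?\<nu>" by (rule Fmeas)
    show "AE p in ?\<nu>. norm (F p) \<le> B" using Fbnd by (intro AE_I2) auto
    show "(window_avg ?\<nu> F \<longlongrightarrow> integral\<^sup>L \<mu> f) at_top" by (rule wlim)
  qed
  have nu: "nu_av ?\<nu> F = integral\<^sup>L \<mu> f"
    unfolding nu_av_def by (rule tendsto_Lim[OF trivial_limit_at_top_linorder wlim])
  have fdef: "f = (\<lambda>x. H x 0 * complex_of_real (measure (M x) {0}))" by (rule ext) (simp add: f_def)
  show ?thesis unfolding Fdef using go nu by (simp only: fdef)
qed


end
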